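(* Let $d\ge1$, $\eta>0$, $\gamma>0$, $\sigma>1$, and let $\mathcal{D}'$ be the distribution on $\mathbb{R}^d\times\{-1,+1\}$ with $y$ uniform on $\{-1,+1\}$, $\bm{\mu}=(\eta,\dots,\eta)$, $\bm{x}\mid y=+1\sim\mathcal{N}(\gamma\bm{\mu},\sigma^2 I)$ and $\bm{x}\mid y=-1\sim\mathcal{N}(-\gamma\bm{\mu},I)$. If a linear classifier $f(\bm{x})=\operatorname{sign}(\bm{w}^\top\bm{x}+b)$ with $\|\bm{w}\|_2=1$ minimizes the standard error $\Pr(f(\bm{x})\neq y)$ over all such $(\bm{w},b)$, then $\bm{w}=(\tfrac{1}{\sqrt{d}},\dots,\tfrac{1}{\sqrt{d}})$.
   Context: $I$ denotes the $d\times d$ identity matrix. *)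

theory Defs
  imports "HOL-Probability.Probability"
begin

definition gauss_density :: "real ^ 'n \<Rightarrow> real \<Rightarrow> real ^ 'n \<Rightarrow> real" where
  "gauss_density m s x =
     (2 * pi * s\<^sup>2) powr (- real CARD('n) / 2) * exp (- (norm (x - m))\<^sup>2 / (2 * s\<^sup>2))"

definition gaussian :: "real ^ 'n \<Rightarrow> real \<Rightarrow> (real ^ 'n) measure" where
  "gaussian m s = density lborel (\<lambda>x. ennreal (gauss_density m s x))"

definition mu_vec :: "real \<Rightarrow> real ^ 'n" where
  "mu_vec \<eta> = (\<chi> i. \<eta>)"

definition lin_clf :: "real ^ 'n \<Rightarrow> real \<Rightarrow> real ^ 'n \<Rightarrow> real" where
  "lin_clf w b x = sgn (w \<bullet> x + b)"

text \<open>Standard error Pr_{(x,y) ~ D'}(f(x) \<noteq> y), with y uniform on {-1,+1},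
  x | y=+1 ~ N(gamma mu, sigma^2 I), x | y=-1 ~ N(-gamma mu, I),
  written via the law of total probability.\<close>
definition std_error :: "real \<Rightarrow> real \<Rightarrow> real \<Rightarrow> real ^ 'n \<Rightarrow> real \<Rightarrow> real" where
  "std_error \<eta> \<gamma> \<sigma> w b =
     1/2 * measure (gaussian (\<gamma> *\<^sub>R mu_vec \<eta>) \<sigma>) {x. lin_clf w b x \<noteq> 1}
   + 1/2 * measure (gaussian (- (\<gamma> *\<^sub>R mu_vec \<eta>)) 1) {x. lin_clf w b x \<noteq> -1}"

end

theory Submission
  imports Defs
begin

definition gd :: "'a::euclidean_space \<Rightarrow> real \<Rightarrow> 'a \<Rightarrow> real" where
  "gd m s x = (2 * pi * s\<^sup>2) powr (- real DIM('a) / 2) * exp (- (norm (x - m))\<^sup>2 / (2 * s\<^sup>2))"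

lemma inner_sum_Basis:
  fixes f :: "'a::euclidean_space \<Rightarrow> real"
  assumes "i \<in> Basis"
  shows "(\<Sum>b\<in>Basis. f b *\<^sub>R b) \<bullet> i = f i"
  using assms by (simp add: inner_sum_left inner_Basis if_distrib sum.delta cong: if_cong)

lemma powr_sqrt_pow:
  assumes "y > 0"
  shows "y powr (- real n / 2) = (1 / sqrt y) ^ n"
proof -
  have "(1 / sqrt y) ^ n = (y powr (-1/2)) ^ n"
    using assms by (simp add: powr_minus_divide powr_half_sqrt)
  also have "\<dots> = y powr (real n * (-1/2))"
    using assms by (simp add: powr_realpow[symmetric] powr_powr)
  finally show ?thesis by simp
qed

lemma gd_prod:
  fixes m :: "'a::euclidean_space"
  assumes "s > 0"
  shows "gd m s (\<Sum>b\<in>Basis. f b *\<^sub>R b) = (\<Prod>b\<in>Basis. normal_density (m \<bullet> b) s (f b))"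
proof -
  let ?x = "(\<Sum>b\<in>Basis. f b *\<^sub>R b) :: 'a"
  have n: "(norm (?x - m))\<^sup>2 = (\<Sum>b\<in>Basis. (f b - m \<bullet> b)\<^sup>2)"
    unfolding power2_norm_eq_inner
    by (subst euclidean_inner) (simp add: inner_diff_left inner_sum_Basis power2_eq_square)
  have "(\<Prod>b\<in>Basis. normal_density (m \<bullet> b) s (f b)) =
        (1 / sqrt (2 * pi * s\<^sup>2)) ^ DIM('a) * exp (\<Sum>b\<in>Basis. -(f b - m \<bullet> b)\<^sup>2/ (2 * s\<^sup>2))"
    unfolding normal_density_def prod.distrib prod_constant by (simp add: exp_sum)
  also have "(\<Sum>b\<in>Basis. -(f b - m \<bullet> b)\<^sup>2/ (2 * s\<^sup>2)) = - (norm (?x - m))\<^sup>2 / (2 * s\<^sup>2)"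
    unfolding n by (simp add: sum_divide_distrib sum_negf)
  also have "(1 / sqrt (2 * pi * s\<^sup>2)) ^ DIM('a) = (2 * pi * s\<^sup>2) powr (- real DIM('a) / 2)"
    using assms by (intro powr_sqrt_pow[symmetric]) simp
  finally show ?thesis unfolding gd_def by simp
qed

lemma PiM_density_eq:
  fixes m :: "'a::euclidean_space"
  assumes "s > 0"
  shows "density (PiM Basis (\<lambda>_. lborel)) (\<lambda>f. ennreal (\<Prod>b\<in>Basis. normal_density (m \<bullet> b) s (f b)))
       = PiM Basis (\<lambda>b. density lborel (\<lambda>x. ennreal (normal_density (m \<bullet> b) s x)))"
    (is "density ?P ?g = PiM Basis ?N")
proof -
  interpret N: product_sigma_finite ?N
    unfolding product_sigma_finite_def
    using assms by (simp add: prob_space_imp_sigma_finite prob_space_normal_density)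
  interpret L: product_sigma_finite "\<lambda>_::'a. lborel :: real measure"
    unfolding product_sigma_finite_def by (auto intro: lborel.sigma_finite_measure_axioms)
  show ?thesis
  proof (rule N.PiM_eqI)
    show "finite (Basis :: 'a set)" by simp
    show "sets (density ?P ?g) = sets (PiM Basis ?N)"
      by (subst sets_density) (rule sets_PiM_cong; simp)
  next
    fix A assume A: "\<And>i. i \<in> (Basis :: 'a set) \<Longrightarrow> A i \<in> sets (?N i)"
    then have A': "\<And>i. i \<in> (Basis :: 'a set) \<Longrightarrow> A i \<in> sets borel" by (metis A sets_density sets_lborel)
    have "emeasure (density ?P ?g) (Pi\<^sub>E Basis A) = (\<integral>\<^sup>+ f. ?g f * indicator (Pi\<^sub>E Basis A) f \<partial>?P)"
      using A' by (intro emeasure_density) (auto intro!: sets_PiM_I_finite)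
    also have "\<dots> = (\<integral>\<^sup>+ f. (\<Prod>b\<in>Basis. ennreal (normal_density (m \<bullet> b) s (f b)) * indicator (A b) (f b)) \<partial>?P)"
    proof (rule nn_integral_cong)
      fix f assume "f \<in> space ?P"
      then have "indicator (Pi\<^sub>E Basis A) f = (\<Prod>b\<in>Basis. indicator (A b) (f b) :: ennreal)"
        by (auto simp: space_PiM indicator_def PiE_iff)
      then show "?g f * indicator (Pi\<^sub>E Basis A) f = (\<Prod>b\<in>Basis. ennreal (normal_density (m \<bullet> b) s (f b)) * indicator (A b) (f b))"
        by (simp add: prod.distrib prod_ennreal normal_density_nonneg)
    qed
    also have "\<dots> = (\<Prod>b\<in>Basis. (\<integral>\<^sup>+ x. ennreal (normal_density (m \<bullet> b) s x) * indicator (A b) x \<partial>lborel))"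
      using A' by (intro L.product_nn_integral_prod) auto
    also have "\<dots> = (\<Prod>b\<in>Basis. emeasure (?N b) (A b))"
      using A' by (intro prod.cong refl emeasure_density[symmetric]) auto
    finally show "emeasure (density ?P ?g) (Pi\<^sub>E Basis A) = (\<Prod>b\<in>Basis. emeasure (?N b) (A b))" .
  qed
qed


lemma gd_measurable[measurable]: "(\<lambda>x. ennreal (gd m s x)) \<in> borel_measurable borel"
  unfolding gd_def by measurable

lemma gauss_distr:
  fixes m :: "'a::euclidean_space"
  assumes "s > 0"
  shows "density lborel (\<lambda>x. ennreal (gd m s x)) =
    distr (PiM Basis (\<lambda>b. density lborel (\<lambda>x. ennreal (normal_density (m \<bullet> b) s x)))) borel (\<lambda>f. \<Sum>b\<in>Basis. f b *\<^sub>R b)"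
proof -
  let ?\<Phi> = "\<lambda>f. (\<Sum>b\<in>Basis. f b *\<^sub>R b) :: 'a"
  let ?P = "PiM (Basis :: 'a set) (\<lambda>_. lborel :: real measure)"
  have meas: "?\<Phi> \<in> measurable ?P borel" by measurable
  have "density lborel (\<lambda>x. ennreal (gd m s x)) = density (distr ?P borel ?\<Phi>) (\<lambda>x. ennreal (gd m s x))"
    by (simp only: lborel_eq[symmetric])
  also have "\<dots> = distr (density ?P (\<lambda>f. ennreal (gd m s (?\<Phi> f)))) borel ?\<Phi>"
    by (rule density_distr) (simp_all add: meas)
  also have "(\<lambda>f. ennreal (gd m s (?\<Phi> f))) = (\<lambda>f. ennreal (\<Prod>b\<in>Basis. normal_density (m \<bullet> b) s (f b)))"
    using assms by (simp add: gd_prod)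
  also have "density ?P \<dots> = PiM Basis (\<lambda>b. density lborel (\<lambda>x. ennreal (normal_density (m \<bullet> b) s x)))"
    using assms by (rule PiM_density_eq)
  finally show ?thesis .
qed


lemma proj_normal:
  fixes m w :: "'a::euclidean_space"
  assumes s: "s > 0" and w: "w \<noteq> 0"
  defines "Q \<equiv> PiM (Basis :: 'a set) (\<lambda>b. density lborel (\<lambda>x. ennreal (normal_density (m \<bullet> b) s x)))"
  shows "distributed Q lborel (\<lambda>f. \<Sum>b\<in>Basis. (w \<bullet> b) * f b) (normal_density (w \<bullet> m) (s * norm w))"
proof -
  let ?N = "\<lambda>b::'a. density lborel (\<lambda>x. ennreal (normal_density (m \<bullet> b) s x))"
  have pN: "\<And>b. prob_space (?N b)" using s by (simp add: prob_space_normal_density)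
  interpret Q: prob_space Q unfolding Q_def by (intro prob_space_PiM pN)
  have comp: "\<And>b. b \<in> Basis \<Longrightarrow> distr Q lborel (\<lambda>f. f b) = ?N b"
  proof -
    fix b :: 'a assume b: "b \<in> Basis"
    have "distr Q lborel (\<lambda>f. f b) = distr Q (?N b) (\<lambda>f. f b)"
      by (rule distr_cong) auto
    also have "\<dots> = ?N b" unfolding Q_def using b pN by (intro distr_PiM_component) auto
    finally show "distr Q lborel (\<lambda>f. f b) = ?N b" .
  qed
  define X where "X = (\<lambda>(b::'a) (f::'a\<Rightarrow>real). if b \<in> Basis then f b else 0)"
  have rv: "\<And>b. Q.random_variable borel (X b)"
    unfolding X_def Q_def by (case_tac "b \<in> Basis") simp_all
  have "Q.indep_vars (\<lambda>_. borel) X Basis"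
  proof (subst Q.indep_vars_iff_distr_eq_PiM)
    show "(Basis :: 'a set) \<noteq> {}" by simp
    show "\<And>b. Q.random_variable borel (X b)" by (rule rv)
    have "distr Q (PiM Basis (\<lambda>_. borel)) (\<lambda>x. \<lambda>i\<in>Basis. X i x) = distr Q Q (\<lambda>x. x)"
    proof (rule distr_cong)
      show "sets (PiM Basis (\<lambda>_. borel)) = sets Q" unfolding Q_def by (rule sets_PiM_cong) auto
      fix x assume "x \<in> space Q"
      then show "(\<lambda>i\<in>Basis. X i x) = x"
        unfolding Q_def X_def by (auto simp: space_PiM PiE_iff restrict_def extensional_def)
    qed simp
    also have "\<dots> = Q" by (rule distr_id2) simp
    also have "Q = PiM Basis (\<lambda>i. distr Q borel (X i))"
      unfolding Q_def[symmetric]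
    proof (unfold Q_def, rule PiM_cong)
      fix b :: 'a assume b: "b \<in> Basis"
      have "distr Q borel (X b) = distr Q lborel (\<lambda>f. f b)"
        by (rule distr_cong) (auto simp: X_def b)
      then show "?N b = distr (PiM Basis ?N) borel (X b)" using comp[OF b] unfolding Q_def by simp
    qed simp
    finally show "distr Q (PiM Basis (\<lambda>_. borel)) (\<lambda>x. \<lambda>i\<in>Basis. X i x) = PiM Basis (\<lambda>i. distr Q borel (X i))" .
  qed
  then have indep: "Q.indep_vars (\<lambda>_. borel) (\<lambda>b f. f b) Basis"
    by (rule Q.indep_vars_cong[THEN iffD1, rotated 3]) (auto simp: X_def)
  define I where "I = {b\<in>Basis. w \<bullet> b \<noteq> 0}"
  have I: "finite I" "I \<noteq> {}" "I \<subseteq> Basis"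
  proof -
    show "finite I" "I \<subseteq> Basis" by (auto simp: I_def)
    show "I \<noteq> {}" using w euclidean_all_zero_iff[of w] by (auto simp: I_def)
  qed
  have "Q.indep_vars (\<lambda>_. borel) (\<lambda>b. (\<lambda>x. (w \<bullet> b) * x) \<circ> (\<lambda>f. f b)) Basis"
    by (rule Q.indep_vars_compose[OF indep]) auto
  then have indepI: "Q.indep_vars (\<lambda>_. borel) (\<lambda>b f. (w \<bullet> b) * f b) I"
    using I by (auto simp: o_def intro: Q.indep_vars_subset)
  have distI: "\<And>b. b \<in> I \<Longrightarrow> distributed Q lborel (\<lambda>f. (w \<bullet> b) * f b) (normal_density ((w \<bullet> b) * (m \<bullet> b)) (\<bar>w \<bullet> b\<bar> * s))"
  proof -
    fix b assume bI: "b \<in> I"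
    then have b: "b \<in> Basis" and wb: "w \<bullet> b \<noteq> 0" by (auto simp: I_def)
    have "distributed Q lborel (\<lambda>f. f b) (normal_density (m \<bullet> b) s)"
      unfolding distributed_def using comp[OF b] b by (auto simp: Q_def)
    from Q.normal_density_affine[OF this s wb, of 0]
    show "distributed Q lborel (\<lambda>f. (w \<bullet> b) * f b) (normal_density ((w \<bullet> b) * (m \<bullet> b)) (\<bar>w \<bullet> b\<bar> * s))"
      by simp
  qed
  have "distributed Q lborel (\<lambda>f. \<Sum>b\<in>I. (w \<bullet> b) * f b)
          (normal_density (\<Sum>b\<in>I. (w \<bullet> b) * (m \<bullet> b)) (sqrt (\<Sum>b\<in>I. (\<bar>w \<bullet> b\<bar> * s)\<^sup>2)))"
    using I s by (intro Q.sum_indep_normal indepI distI) (auto simp: I_def)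
  moreover have "\<And>f. (\<Sum>b\<in>I. (w \<bullet> b) * f b) = (\<Sum>b\<in>Basis. (w \<bullet> b) * f b)"
    using I by (intro sum.mono_neutral_left) (auto simp: I_def)
  moreover have "(\<Sum>b\<in>I. (w \<bullet> b) * (m \<bullet> b)) = w \<bullet> m"
  proof -
    have "(\<Sum>b\<in>I. (w \<bullet> b) * (m \<bullet> b)) = (\<Sum>b\<in>Basis. (w \<bullet> b) * (m \<bullet> b))"
      using I by (intro sum.mono_neutral_left) (auto simp: I_def)
    then show ?thesis by (simp add: euclidean_inner[of w m])
  qed
  moreover have "sqrt (\<Sum>b\<in>I. (\<bar>w \<bullet> b\<bar> * s)\<^sup>2) = s * norm w"
  proof -
    have "(\<Sum>b\<in>I. (\<bar>w \<bullet> b\<bar> * s)\<^sup>2) = (\<Sum>b\<in>Basis. (\<bar>w \<bullet> b\<bar> * s)\<^sup>2)"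
      using I by (intro sum.mono_neutral_left) (auto simp: I_def)
    also have "\<dots> = s\<^sup>2 * (\<Sum>b\<in>Basis. (w \<bullet> b) * (w \<bullet> b))"
      by (simp add: sum_distrib_left power_mult_distrib power2_eq_square mult_ac)
    also have "\<dots> = (s * norm w)\<^sup>2"
      by (simp add: euclidean_inner[of w w, symmetric] power_mult_distrib power2_norm_eq_inner)
    finally show ?thesis using s by simp
  qed
  ultimately show ?thesis by simp
qed


lemma dist_measure:
  assumes "distributed M lborel X f" "A \<in> sets borel"
  shows "measure M (X -` A \<inter> space M) = measure (density lborel f) A"
proof -
  have "measure (distr M lborel X) A = measure M (X -` A \<inter> space M)"
    using assms by (intro measure_distr) (auto simp: distributed_def)
  then show ?thesis using assms by (simp add: distributed_def)
qed

lemma gauss_half: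
  fixes m w :: "'a::euclidean_space"
  assumes s: "s > 0" and w: "norm w = 1"
  shows "measure (density lborel (\<lambda>x. ennreal (gd m s x))) {x. w \<bullet> x \<le> c}
       = measure (density lborel (\<lambda>x. ennreal (normal_density (w \<bullet> m) s x))) {..c}"
proof -
  let ?Q = "PiM (Basis :: 'a set) (\<lambda>b. density lborel (\<lambda>x. ennreal (normal_density (m \<bullet> b) s x)))"
  let ?\<Phi> = "\<lambda>f. (\<Sum>b\<in>Basis. f b *\<^sub>R b) :: 'a"
  have w0: "w \<noteq> 0" using w by auto
  have meas: "?\<Phi> \<in> measurable ?Q borel" by measurable
  have hs: "{x. w \<bullet> x \<le> c} \<in> sets borel" by measurable
  have "measure (density lborel (\<lambda>x. ennreal (gd m s x))) {x. w \<bullet> x \<le> c}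
      = measure (distr ?Q borel ?\<Phi>) {x. w \<bullet> x \<le> c}"
    using s by (simp add: gauss_distr)
  also have "\<dots> = measure ?Q (?\<Phi> -` {x. w \<bullet> x \<le> c} \<inter> space ?Q)"
    using meas hs by (rule measure_distr)
  also have "?\<Phi> -` {x. w \<bullet> x \<le> c} \<inter> space ?Q = (\<lambda>f. \<Sum>b\<in>Basis. (w \<bullet> b) * f b) -` {..c} \<inter> space ?Q"
    by (auto simp: inner_sum_right mult.commute)
  also have "measure ?Q \<dots> = measure (density lborel (\<lambda>x. ennreal (normal_density (w \<bullet> m) (s * norm w) x))) {..c}"
    using proj_normal[OF s w0, of m] by (intro dist_measure) auto
  finally show ?thesis using w by simp
qed


lemma normal_shift:
  assumes s: "s > 0"
  shows "measure (density lborel (\<lambda>x. ennreal (normal_density \<mu> s x))) {..c}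
       = measure (density lborel (\<lambda>x. ennreal (normal_density 0 s x))) {..c - \<mu>}"
proof -
  let ?M = "density lborel (\<lambda>x. ennreal (normal_density \<mu> s x))"
  interpret M: prob_space ?M using s by (simp add: prob_space_normal_density)
  have "distributed ?M lborel (\<lambda>x. x) (normal_density \<mu> s)"
    unfolding distributed_def by (simp add: distr_id2)
  from M.normal_density_affine[OF this s, of 1 "-\<mu>"]
  have "distributed ?M lborel (\<lambda>x. - \<mu> + x) (normal_density 0 s)" by simp
  then have "measure ?M ((\<lambda>x. - \<mu> + x) -` {..c - \<mu>} \<inter> space ?M)
      = measure (density lborel (\<lambda>x. ennreal (normal_density 0 s x))) {..c - \<mu>}"
    by (rule dist_measure) simp
  moreover have "(\<lambda>x. - \<mu> + x) -` {..c - \<mu>} \<inter> space ?M = {..c}" by auto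
  ultimately show ?thesis by simp
qed

lemma normal_strict:
  assumes s: "s > 0" and c: "c1 < c2"
  shows "measure (density lborel (\<lambda>x. ennreal (normal_density 0 s x))) {..c1}
       < measure (density lborel (\<lambda>x. ennreal (normal_density 0 s x))) {..c2}"
proof -
  let ?M = "density lborel (\<lambda>x. ennreal (normal_density 0 s x))"
  interpret M: prob_space ?M using s by (simp add: prob_space_normal_density)
  have nn: "{c1<..c2} \<notin> null_sets ?M"
  proof
    assume "{c1<..c2} \<in> null_sets ?M"
    then have "AE x in lborel. x \<in> {c1<..c2} \<longrightarrow> ennreal (normal_density 0 s x) = 0"
      by (subst (asm) null_sets_density_iff) auto
    then have "AE x in lborel. x \<notin> {c1<..c2}"
      by (rule eventually_mono) (metis normal_density_pos[OF s] ennreal_eq_0_iff not_le)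
    then have "emeasure lborel {c1<..c2} = 0"
      by (subst AE_iff_measurable[symmetric]) auto
    with c show False by simp
  qed
  have pos: "measure ?M {c1<..c2} > 0"
  proof -
    have "measure ?M {c1<..c2} \<noteq> 0"
      using nn M.emeasure_eq_measure[of "{c1<..c2}"] by (auto simp: null_sets_def)
    then show ?thesis using measure_nonneg[of ?M "{c1<..c2}"] by linarith
  qed
  have "{..c2} = {..c1} \<union> {c1<..c2}" using c by auto
  then have "measure ?M {..c2} = measure ?M {..c1} + measure ?M {c1<..c2}"
    by (simp only:) (rule M.finite_measure_Union, auto)
  with pos show ?thesis by simp
qed


lemma gaussian_eq_gd: "gaussian (m :: real ^ 'n) s = density lborel (\<lambda>x. ennreal (gd m s x))"
proof -
  have "DIM(real ^ 'n) = CARD('n)" by simp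
  then show ?thesis unfolding gaussian_def gauss_density_def gd_def by (simp only:)
qed

lemma err_formula:
  fixes w m :: "real ^ 'n"
  assumes s: "\<sigma> > 0" and w: "norm w = 1"
  shows "std_error \<eta> \<gamma> \<sigma> w b =
     1/2 * measure (density lborel (\<lambda>x. ennreal (normal_density 0 \<sigma> x))) {..-b - w \<bullet> (\<gamma> *\<^sub>R mu_vec \<eta>)}
   + 1/2 * measure (density lborel (\<lambda>x. ennreal (normal_density 0 1 x))) {..b - w \<bullet> (\<gamma> *\<^sub>R mu_vec \<eta>)}"
proof -
  let ?m = "\<gamma> *\<^sub>R mu_vec \<eta> :: real ^ 'n"
  have e1: "{x. lin_clf w b x \<noteq> 1} = {x. w \<bullet> x \<le> -b}"
    by (auto simp: lin_clf_def sgn_if)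
  have e2: "{x. lin_clf w b x \<noteq> -1} = {x. (-w) \<bullet> x \<le> b}"
    by (auto simp: lin_clf_def sgn_if)
  have w': "norm (-w) = 1" using w by simp
  have t1: "measure (gaussian ?m \<sigma>) {x. lin_clf w b x \<noteq> 1}
      = measure (density lborel (\<lambda>x. ennreal (normal_density 0 \<sigma> x))) {..-b - w \<bullet> ?m}"
    unfolding e1 gaussian_eq_gd gauss_half[OF s w] normal_shift[OF s, of "w \<bullet> ?m" "-b"] ..
  have t2: "measure (gaussian (- ?m) 1) {x. lin_clf w b x \<noteq> -1}
      = measure (density lborel (\<lambda>x. ennreal (normal_density 0 1 x))) {..b - w \<bullet> ?m}"
  proof -
    have "measure (density lborel (\<lambda>x. ennreal (gd (- ?m) 1 x))) {x. (-w) \<bullet> x \<le> b}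
        = measure (density lborel (\<lambda>x. ennreal (normal_density ((-w) \<bullet> (- ?m)) 1 x))) {..b}"
      by (rule gauss_half) (simp_all add: w)
    also have "\<dots> = measure (density lborel (\<lambda>x. ennreal (normal_density 0 1 x))) {..b - (-w) \<bullet> (- ?m)}"
      by (rule normal_shift) simp
    finally show ?thesis unfolding e2 gaussian_eq_gd by simp
  qed
  show ?thesis unfolding std_error_def t1 t2 ..
qed

theorem lemma1:
  fixes \<eta> \<gamma> \<sigma> b :: real and w :: "real ^ 'n"
  assumes "\<eta> > 0" and "\<gamma> > 0" and "\<sigma> > 1"
    and "norm w = 1"
    and "\<forall>(w' :: real ^ 'n) b'. norm w' = 1 \<longrightarrow>
           std_error \<eta> \<gamma> \<sigma> w b \<le> std_error \<eta> \<gamma> \<sigma> w' b'"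
  shows "w = (\<chi> i. 1 / sqrt (real CARD('n)))"
proof (rule ccontr)
  define u :: "real ^ 'n" where "u = (\<chi> i. 1 / sqrt (real CARD('n)))"
  define d where "d = real CARD('n)"
  have d: "d > 0" unfolding d_def by simp
  assume "w \<noteq> (\<chi> i. 1 / sqrt (real CARD('n)))"
  then have wu: "w \<noteq> u" unfolding u_def .
  have sq: "sqrt d * sqrt d = d" using d by simp
  have sdp: "sqrt d > 0" using d by simp
  have uu: "u \<bullet> u = 1"
  proof -
    have "u \<bullet> u = (\<Sum>i\<in>(UNIV::'n set). (1 / sqrt d) * (1 / sqrt d))"
      by (simp add: u_def inner_vec_def d_def)
    also have "\<dots> = d * ((1 / sqrt d) * (1 / sqrt d))"
      by (simp add: d_def)
    also have "\<dots> = 1" using d sq by (simp add: field_simps)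
    finally show ?thesis .
  qed
  have nu: "norm u = 1" using uu by (simp add: norm_eq_sqrt_inner)
  have ww: "w \<bullet> w = 1" using assms(4) by (simp add: norm_eq_sqrt_inner)
  have "0 < (norm (w - u))\<^sup>2" using wu by simp
  also have "(norm (w - u))\<^sup>2 = w \<bullet> w - 2 * (w \<bullet> u) + u \<bullet> u"
    by (simp add: power2_norm_eq_inner inner_diff_left inner_diff_right inner_commute)
  finally have wu1: "w \<bullet> u < 1" using uu ww by simp
  have sw: "(\<Sum>i\<in>UNIV. w $ i) = sqrt d * (w \<bullet> u)"
  proof -
    have "w \<bullet> u = (\<Sum>i\<in>UNIV. w $ i * (1 / sqrt d))"
      by (simp add: u_def inner_vec_def d_def)
    also have "\<dots> = (\<Sum>i\<in>UNIV. w $ i) / sqrt d"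
      by (simp add: sum_divide_distrib)
    finally show ?thesis using sdp by (simp add: field_simps)
  qed
  have su: "(\<Sum>i\<in>UNIV. u $ i) = sqrt d"
  proof -
    have "(\<Sum>i\<in>UNIV. u $ i) = d * (1 / sqrt d)"
      by (simp add: u_def d_def)
    also have "\<dots> = sqrt d" using sdp sq by (simp add: field_simps)
    finally show ?thesis .
  qed
  let ?m = "\<gamma> *\<^sub>R mu_vec \<eta> :: real ^ 'n"
  have mw: "\<And>v :: real ^ 'n. v \<bullet> ?m = \<gamma> * \<eta> * (\<Sum>i\<in>UNIV. v $ i)"
    by (simp add: mu_vec_def inner_vec_def sum_distrib_left sum_distrib_right mult_ac)
  have tw: "w \<bullet> ?m = \<gamma> * \<eta> * sqrt d * (w \<bullet> u)"
    using sw mw[of w] by simp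
  have tu: "u \<bullet> ?m = \<gamma> * \<eta> * sqrt d"
    using su mw[of u] by simp
  have lt: "w \<bullet> ?m < u \<bullet> ?m"
    unfolding tw tu using wu1 assms(1,2) d by simp
  have s: "\<sigma> > 0" using assms(3) by simp
  have "std_error \<eta> \<gamma> \<sigma> u b < std_error \<eta> \<gamma> \<sigma> w b"
    unfolding err_formula[OF s assms(4)] err_formula[OF s nu]
    using normal_strict[OF s, of "-b - u \<bullet> ?m" "-b - w \<bullet> ?m"] normal_strict[of 1 "b - u \<bullet> ?m" "b - w \<bullet> ?m"] lt
    by simp
  moreover have "std_error \<eta> \<gamma> \<sigma> w b \<le> std_error \<eta> \<gamma> \<sigma> u b"
    using assms(5) nu by blast
  ultimately show False by simp
qed

end
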